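(* In the setting of the MTL-IUS iteration below, under $L$-smoothness, $\mu$-strong convexity, bounded gradient variance and bounded second moments, and with $\eta_t\le\frac1L$, $\eta_t$ non-increasing and $\eta_t\le 2\eta_{t+1}$, the quantity $\Delta_t=\mathbb{E}\|w_t-w^*\|^2$ satisfies $$\Delta_{t+1}\le(1-\mu\eta_t)\Delta_t+\eta_t^2B,\qquad B=\frac1{N^2}\sum_{k=1}^N\sigma_k^2+2L\Gamma+G^2 .$$
   Context: $F^{(1)},\dots,F^{(N)}:\mathbb{R}^d\to\mathbb{R}$, $F=\frac1N\sum_kF^{(k)}$, minimizer $w^*$, $F^*=F(w^* )$, ${F^{(k)}}^*=\min F^{(k)}$, $\Gamma=F^*-\frac1N\sum_k{F^{(k)}}^*$. Each $F^{(k)}$ is $L$-smooth ($F^{(k)}(v)\le F^{(k)}(w)+(v-w)^T\nabla F^{(k)}(w)+\frac L2\|v-w\|^2$) and $\mu$-strongly convex ($F^{(k)}(v)\ge F^{(k)}(w)+(v-w)^T\nabla F^{(k)}(w)+\frac\mu2\|v-w\|^2$). Stochastic gradients $\nabla F^{(k)}(w_t,\xi_t^k)$ with independently drawn samples are unbiased, $\mathbb{E}\|\nabla F^{(k)}(w_t,\xi_t^k)-\nabla F^{(k)}(w_t)\|^2\le\sigma_k^2$, and $\mathbb{E}\|\nabla F^{(k)}(w_t,\xi_t^k)\|^2\le G^2$. Iteration: $v_{t+1}^k=w_t-\eta_t\nabla F^{(k)}(w_t,\xi_t^k)$, $w_{t+1}=v_{t+1}^{s_t}$ with $s_t$ uniform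 on $\{1,\dots,N\}$ and independent of all else. *)

theory Defs
  imports "HOL-Probability.Probability"
begin

definition L_smooth :: "real \<Rightarrow> ('a::euclidean_space \<Rightarrow> real) \<Rightarrow> ('a \<Rightarrow> 'a) \<Rightarrow> bool" where
  "L_smooth L f gf \<longleftrightarrow>
     (\<forall>v w. f v \<le> f w + (v - w) \<bullet> gf w + L / 2 * (norm (v - w))\<^sup>2)"

definition strongly_convex :: "real \<Rightarrow> ('a::euclidean_space \<Rightarrow> real) \<Rightarrow> ('a \<Rightarrow> 'a) \<Rightarrow> bool" where
  "strongly_convex \<mu> f gf \<longleftrightarrow>
     (\<forall>v w. f v \<ge> f w + (v - w) \<bullet> gf w + \<mu> / 2 * (norm (v - w))\<^sup>2)"

definition is_gradient :: "('a::euclidean_space \<Rightarrow> real) \<Rightarrow> ('a \<Rightarrow> 'a) \<Rightarrow> bool" where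
  "is_gradient f gf \<longleftrightarrow> (\<forall>w. (f has_derivative (\<lambda>h. gf w \<bullet> h)) (at w))"

text \<open>Independence of two random variables with possibly different codomain types
  (the library's indep_var requires equal types; this is exactly its characterisation
  indep_var_eq, stated for heterogeneous types).\<close>
definition indep_rv :: "'m measure \<Rightarrow> 'a measure \<Rightarrow> ('m \<Rightarrow> 'a) \<Rightarrow> 'b measure \<Rightarrow> ('m \<Rightarrow> 'b) \<Rightarrow> bool" where
  "indep_rv M S X T Y \<longleftrightarrow>
     X \<in> measurable M S \<and> Y \<in> measurable M T \<and>
     prob_space.indep_set M
       (sigma_sets (space M) {X -` A \<inter> space M | A. A \<in> sets S})
       (sigma_sets (space M) {Y -` A \<inter> space M | A. A \<in> sets T})"

end

theory Submission
  imports Defs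
begin

lemma (in prob_space) indep_set_mono2:
  "indep_set A B \<Longrightarrow> A' \<subseteq> A \<Longrightarrow> B' \<subseteq> B \<Longrightarrow> indep_set A' B'"
  unfolding indep_sets2_eq by blast

lemma (in prob_space) indep_rv_compose:
  assumes ind: "indep_rv M S X T Y" and f: "f \<in> measurable S S'" and h: "h \<in> measurable T T'"
  shows "indep_rv M S' (\<lambda>\<omega>. f (X \<omega>)) T' (\<lambda>\<omega>. h (Y \<omega>))"
proof -
  have X: "X \<in> measurable M S" and Y: "Y \<in> measurable M T"
   and I: "indep_set (sigma_sets (space M) {X -` A \<inter> space M | A. A \<in> sets S})
       (sigma_sets (space M) {Y -` A \<inter> space M | A. A \<in> sets T})"
    using ind unfolding indep_rv_def by auto
  have s1: "sigma_sets (space M) {(\<lambda>\<omega>. f (X \<omega>)) -` A \<inter> space M | A. A \<in> sets S'}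
     \<subseteq> sigma_sets (space M) {X -` A \<inter> space M | A. A \<in> sets S}"
  proof (rule sigma_sets_mono, safe)
    fix A assume A: "A \<in> sets S'"
    have "(\<lambda>\<omega>. f (X \<omega>)) -` A \<inter> space M = X -` (f -` A \<inter> space S) \<inter> space M"
      using measurable_space[OF X] by auto
    moreover have "f -` A \<inter> space S \<in> sets S" using f A by (rule measurable_sets)
    ultimately have "(\<lambda>\<omega>. f (X \<omega>)) -` A \<inter> space M \<in> {X -` B \<inter> space M | B. B \<in> sets S}"
      by blast
    then show "(\<lambda>\<omega>. f (X \<omega>)) -` A \<inter> space M \<in> sigma_sets (space M) {X -` A \<inter> space M | A. A \<in> sets S}"
      by (rule sigma_sets.Basic)
  qed
  have s2: "sigma_sets (space M) {(\<lambda>\<omega>. h (Y \<omega>)) -` A \<inter> space M | A. A \<in> sets T'}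
     \<subseteq> sigma_sets (space M) {Y -` A \<inter> space M | A. A \<in> sets T}"
  proof (rule sigma_sets_mono, safe)
    fix A assume A: "A \<in> sets T'"
    have "(\<lambda>\<omega>. h (Y \<omega>)) -` A \<inter> space M = Y -` (h -` A \<inter> space T) \<inter> space M"
      using measurable_space[OF Y] by auto
    moreover have "h -` A \<inter> space T \<in> sets T" using h A by (rule measurable_sets)
    ultimately have "(\<lambda>\<omega>. h (Y \<omega>)) -` A \<inter> space M \<in> {Y -` B \<inter> space M | B. B \<in> sets T}"
      by blast
    then show "(\<lambda>\<omega>. h (Y \<omega>)) -` A \<inter> space M \<in> sigma_sets (space M) {Y -` A \<inter> space M | A. A \<in> sets T}"
      by (rule sigma_sets.Basic)
  qed
  show ?thesis unfolding indep_rv_def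
    using measurable_compose[OF X f] measurable_compose[OF Y h] indep_set_mono2[OF I s1 s2]
    by auto
qed

lemma (in prob_space) indep_rv_var:
  "indep_rv M S X T Y \<Longrightarrow> indep_var S X T Y"
  unfolding indep_rv_def indep_var_eq by auto

lemma (in prob_space) distr_indep:
  assumes ind: "indep_rv M S X T Y"
  shows "distr M (S \<Otimes>\<^sub>M T) (\<lambda>\<omega>. (X \<omega>, Y \<omega>)) = distr M S X \<Otimes>\<^sub>M distr M T Y"
proof -
  have X: "X \<in> measurable M S" and Y: "Y \<in> measurable M T"
   and I: "indep_set (sigma_sets (space M) {X -` A \<inter> space M | A. A \<in> sets S})
       (sigma_sets (space M) {Y -` A \<inter> space M | A. A \<in> sets T})"
    using ind unfolding indep_rv_def by auto
  have XY: "(\<lambda>\<omega>. (X \<omega>, Y \<omega>)) \<in> measurable M (S \<Otimes>\<^sub>M T)" using X Y by measurable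
  show ?thesis
  proof (rule pair_measure_eqI[symmetric])
    show "sigma_finite_measure (distr M S X)"
      using prob_space_distr[OF X] by (simp add: prob_space_imp_sigma_finite)
    show "sigma_finite_measure (distr M T Y)"
      using prob_space_distr[OF Y] by (simp add: prob_space_imp_sigma_finite)
    show "sets (distr M S X \<Otimes>\<^sub>M distr M T Y) = sets (distr M (S \<Otimes>\<^sub>M T) (\<lambda>\<omega>. (X \<omega>, Y \<omega>)))"
      by (simp add: sets_pair_measure)
    fix A B assume A: "A \<in> sets (distr M S X)" and B: "B \<in> sets (distr M T Y)"
    then have A': "A \<in> sets S" and B': "B \<in> sets T" by auto
    have e: "(\<lambda>\<omega>. (X \<omega>, Y \<omega>)) -` (A \<times> B) \<inter> space M = (X -` A \<inter> space M) \<inter> (Y -` B \<inter> space M)"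
      by auto
    have p: "prob ((X -` A \<inter> space M) \<inter> (Y -` B \<inter> space M)) = prob (X -` A \<inter> space M) * prob (Y -` B \<inter> space M)"
      by (rule indep_setD[OF I]) (auto intro!: sigma_sets.Basic A' B')
    show "emeasure (distr M S X) A * emeasure (distr M T Y) B = emeasure (distr M (S \<Otimes>\<^sub>M T) (\<lambda>\<omega>. (X \<omega>, Y \<omega>))) (A \<times> B)"
      using A' B' X Y XY p
      by (simp add: emeasure_distr e emeasure_eq_measure ennreal_mult')
  qed
qed

lemma (in prob_space) fubini_G:
  fixes W :: "'a \<Rightarrow> 'b::euclidean_space" and Z :: "'a \<Rightarrow> 'c" and S :: "'a \<Rightarrow> nat"
    and q :: "'b \<Rightarrow> 'c \<Rightarrow> nat \<Rightarrow> real"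
  assumes i1: "indep_rv M borel W (\<Xi> \<Otimes>\<^sub>M count_space UNIV) (\<lambda>\<omega>. (Z \<omega>, S \<omega>))"
    and qm: "(\<lambda>(x, z, j). q x z j) \<in> borel_measurable (borel \<Otimes>\<^sub>M (\<Xi> \<Otimes>\<^sub>M count_space UNIV))"
    and int: "integrable M (\<lambda>\<omega>. q (W \<omega>) (Z \<omega>) (S \<omega>))"
  shows "(\<integral>\<omega>. q (W \<omega>) (Z \<omega>) (S \<omega>) \<partial>M) = (\<integral>x. (\<integral>\<omega>. q x (Z \<omega>) (S \<omega>) \<partial>M) \<partial>distr M borel W)"
    and "AE x in distr M borel W. integrable M (\<lambda>\<omega>. q x (Z \<omega>) (S \<omega>))"
    and "integrable (distr M borel W) (\<lambda>x. (\<integral>\<omega>. q x (Z \<omega>) (S \<omega>) \<partial>M))"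
proof -
  have Wm: "W \<in> borel_measurable M" and ZSm: "(\<lambda>\<omega>. (Z \<omega>, S \<omega>)) \<in> measurable M (\<Xi> \<Otimes>\<^sub>M count_space UNIV)"
    using i1 unfolding indep_rv_def by auto
  let ?Dw = "distr M borel W" and ?P2 = "distr M (\<Xi> \<Otimes>\<^sub>M count_space UNIV) (\<lambda>\<omega>. (Z \<omega>, S \<omega>))"
  let ?Q = "\<lambda>(x, z, j). q x z j"
  have Phim: "(\<lambda>\<omega>. (W \<omega>, (Z \<omega>, S \<omega>))) \<in> measurable M (borel \<Otimes>\<^sub>M (\<Xi> \<Otimes>\<^sub>M count_space UNIV))"
    using Wm ZSm by measurable
  have D: "distr M (borel \<Otimes>\<^sub>M (\<Xi> \<Otimes>\<^sub>M count_space UNIV)) (\<lambda>\<omega>. (W \<omega>, (Z \<omega>, S \<omega>))) = ?Dw \<Otimes>\<^sub>M ?P2"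
    by (rule distr_indep[OF i1])
  interpret Dw: prob_space ?Dw by (rule prob_space_distr[OF Wm])
  interpret P2: prob_space ?P2 by (rule prob_space_distr[OF ZSm])
  interpret PP: pair_prob_space ?Dw ?P2 ..
  have intQ: "integrable (?Dw \<Otimes>\<^sub>M ?P2) ?Q"
    unfolding D[symmetric] using int qm Phim by (subst integrable_distr_eq) auto
  have eq1: "(\<integral>\<omega>. q (W \<omega>) (Z \<omega>) (S \<omega>) \<partial>M) = integral\<^sup>L (?Dw \<Otimes>\<^sub>M ?P2) ?Q"
    unfolding D[symmetric] using qm Phim by (subst integral_distr) auto
  have slice: "\<And>x. (\<lambda>y. ?Q (x, y)) \<in> borel_measurable (\<Xi> \<Otimes>\<^sub>M count_space UNIV)"
    using measurable_Pair2[OF qm] by auto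
  have inner: "\<And>x. (\<integral>y. (case y of (z, j) \<Rightarrow> q x z j) \<partial>?P2) = (\<integral>\<omega>. q x (Z \<omega>) (S \<omega>) \<partial>M)"
    using slice ZSm by (subst integral_distr) auto
  have innerI: "\<And>x. integrable ?P2 (\<lambda>y. ?Q (x, y)) = integrable M (\<lambda>\<omega>. q x (Z \<omega>) (S \<omega>))"
    using slice ZSm by (subst integrable_distr_eq) auto
  show "(\<integral>\<omega>. q (W \<omega>) (Z \<omega>) (S \<omega>) \<partial>M) = (\<integral>x. (\<integral>\<omega>. q x (Z \<omega>) (S \<omega>) \<partial>M) \<partial>?Dw)"
    using eq1 PP.integral_fst'[OF intQ] inner by simp
  show "AE x in ?Dw. integrable M (\<lambda>\<omega>. q x (Z \<omega>) (S \<omega>))"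
    using PP.AE_integrable_fst'[OF intQ] by (rule AE_mp) (auto intro!: AE_I2 simp: innerI[symmetric])
  show "integrable ?Dw (\<lambda>x. (\<integral>\<omega>. q x (Z \<omega>) (S \<omega>) \<partial>M))"
    using PP.integrable_fst'[OF intQ] by (simp add: inner)
qed

lemma (in prob_space) key_K1:
  fixes W :: "'a \<Rightarrow> 'b::euclidean_space" and Z :: "'a \<Rightarrow> 'c" and S :: "'a \<Rightarrow> nat"
    and h :: "'b \<Rightarrow> 'c \<Rightarrow> real"
  assumes i1: "indep_rv M borel W (\<Xi> \<Otimes>\<^sub>M count_space UNIV) (\<lambda>\<omega>. (Z \<omega>, S \<omega>))"
    and i2: "indep_rv M \<Xi> Z (count_space UNIV) S"
    and hm: "(\<lambda>(x, z). h x z) \<in> borel_measurable (borel \<Otimes>\<^sub>M \<Xi>)"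
    and int: "integrable M (\<lambda>\<omega>. h (W \<omega>) (Z \<omega>))"
  shows "(\<integral>\<omega>. (if S \<omega> = k then h (W \<omega>) (Z \<omega>) else 0) \<partial>M)
          = prob {\<omega>\<in>space M. S \<omega> = k} * (\<integral>\<omega>. h (W \<omega>) (Z \<omega>) \<partial>M)"
proof -
  have Wm: "W \<in> borel_measurable M" and ZSm: "(\<lambda>\<omega>. (Z \<omega>, S \<omega>)) \<in> measurable M (\<Xi> \<Otimes>\<^sub>M count_space UNIV)"
    using i1 unfolding indep_rv_def by auto
  have Zm: "Z \<in> measurable M \<Xi>" and Sm: "S \<in> measurable M (count_space UNIV)"
    using i2 unfolding indep_rv_def by auto
  note hm[measurable]
  have qm1: "(\<lambda>(x, z, j). h x z) \<in> borel_measurable (borel \<Otimes>\<^sub>M (\<Xi> \<Otimes>\<^sub>M count_space UNIV))"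
    by measurable
  have qm2: "(\<lambda>(x, z, j). if j = k then h x z else 0) \<in> borel_measurable (borel \<Otimes>\<^sub>M (\<Xi> \<Otimes>\<^sub>M count_space UNIV))"
    by measurable
  have hWZm: "(\<lambda>\<omega>. h (W \<omega>) (Z \<omega>)) \<in> borel_measurable M" using int by auto
  have int2: "integrable M (\<lambda>\<omega>. if S \<omega> = k then h (W \<omega>) (Z \<omega>) else 0)"
  proof (rule Bochner_Integration.integrable_bound[OF int])
    show "(\<lambda>\<omega>. if S \<omega> = k then h (W \<omega>) (Z \<omega>) else 0) \<in> borel_measurable M"
      using hWZm Sm by measurable
  qed auto
  note G1 = fubini_G[OF i1 qm1, simplified, OF int]
  note G2 = fubini_G[OF i1 qm2, simplified, OF int2]
  let ?Dw = "distr M borel W"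
  let ?p = "prob {\<omega>\<in>space M. S \<omega> = k}"
  have Ik: "(\<integral>\<omega>. (if S \<omega> = k then 1 else 0::real) \<partial>M) = ?p"
  proof -
    have "(\<integral>\<omega>. (if S \<omega> = k then 1 else 0::real) \<partial>M) = (\<integral>\<omega>. indicator {\<omega>\<in>space M. S \<omega> = k} \<omega> \<partial>M)"
      by (rule Bochner_Integration.integral_cong) (auto simp: indicator_def)
    also have "\<dots> = ?p" using Sm by simp
    finally show ?thesis .
  qed
  have inner: "(\<integral>\<omega>. (if S \<omega> = k then h x (Z \<omega>) else 0) \<partial>M) = ?p * (\<integral>\<omega>. h x (Z \<omega>) \<partial>M)"
    if ix: "integrable M (\<lambda>\<omega>. h x (Z \<omega>))" for x
  proof -
    have hx: "h x \<in> borel_measurable \<Xi>" using measurable_Pair2[OF hm, of x] by simp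
    have ind: "indep_var borel (\<lambda>\<omega>. h x (Z \<omega>)) borel (\<lambda>\<omega>. if S \<omega> = k then 1 else (0::real))"
      by (rule indep_rv_var, rule indep_rv_compose[OF i2 hx]) simp
    have i3: "integrable M (\<lambda>\<omega>. if S \<omega> = k then 1 else (0::real))"
      by (rule integrable_const_bound[where B=1]) (use measurable_compose[OF Sm, of "\<lambda>j. if j = k then 1 else (0::real)" borel] in auto)
    have "(\<integral>\<omega>. (if S \<omega> = k then h x (Z \<omega>) else 0) \<partial>M)
        = (\<integral>\<omega>. h x (Z \<omega>) * (if S \<omega> = k then 1 else 0) \<partial>M)"
      by (rule Bochner_Integration.integral_cong) auto
    also have "\<dots> = (\<integral>\<omega>. h x (Z \<omega>) \<partial>M) * (\<integral>\<omega>. (if S \<omega> = k then 1 else 0) \<partial>M)"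
      by (rule indep_var_lebesgue_integral[OF ind ix i3])
    finally show ?thesis using Ik by simp
  qed
  have "(\<integral>\<omega>. (if S \<omega> = k then h (W \<omega>) (Z \<omega>) else 0) \<partial>M)
      = (\<integral>x. (\<integral>\<omega>. (if S \<omega> = k then h x (Z \<omega>) else 0) \<partial>M) \<partial>?Dw)"
    using G2(1) by simp
  also have "\<dots> = (\<integral>x. ?p * (\<integral>\<omega>. h x (Z \<omega>) \<partial>M) \<partial>?Dw)"
  proof (rule integral_cong_AE)
    show "(\<lambda>x. \<integral>\<omega>. (if S \<omega> = k then h x (Z \<omega>) else 0) \<partial>M) \<in> borel_measurable ?Dw"
      using G2(3) by auto
    show "(\<lambda>x. ?p * (\<integral>\<omega>. h x (Z \<omega>) \<partial>M)) \<in> borel_measurable ?Dw"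
      using G1(3) by auto
    show "AE x in ?Dw. (\<integral>\<omega>. (if S \<omega> = k then h x (Z \<omega>) else 0) \<partial>M) = ?p * (\<integral>\<omega>. h x (Z \<omega>) \<partial>M)"
      using G1(2) by (rule AE_mp) (auto intro!: AE_I2 inner)
  qed
  also have "\<dots> = ?p * (\<integral>x. (\<integral>\<omega>. h x (Z \<omega>) \<partial>M) \<partial>?Dw)" by simp
  also have "\<dots> = ?p * (\<integral>\<omega>. h (W \<omega>) (Z \<omega>) \<partial>M)" using G1(1) by simp
  finally show ?thesis .
qed

lemma quad_lb:
  fixes a b \<mu> :: real assumes "\<mu> > 0"
  shows "\<mu> / 2 * a\<^sup>2 - a * b \<ge> - (b\<^sup>2 / (2 * \<mu>))"
proof -
  have "0 \<le> (\<mu> * a - b)\<^sup>2" by simp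
  hence "0 \<le> (\<mu> * a - b)\<^sup>2 / (2 * \<mu>)" using assms by simp
  also have "(\<mu> * a - b)\<^sup>2 / (2 * \<mu>) = \<mu> / 2 * a\<^sup>2 - a * b + b\<^sup>2 / (2 * \<mu>)"
    using assms by (simp add: field_simps power2_eq_square)
  finally show ?thesis by simp
qed

lemma sc_bdd:
  assumes sc: "strongly_convex \<mu> f gf" and mu: "\<mu> > 0"
  shows "bdd_below (range f)"
proof (rule bdd_belowI2)
  fix v
  have "f v \<ge> f 0 + (v - 0) \<bullet> gf 0 + \<mu> / 2 * (norm (v - 0))\<^sup>2"
    using sc unfolding strongly_convex_def by blast
  moreover have "v \<bullet> gf 0 \<ge> - (norm v * norm (gf 0))"
    using Cauchy_Schwarz_ineq2[of v "gf 0"] by linarith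
  moreover have "\<mu> / 2 * (norm v)\<^sup>2 - norm v * norm (gf 0) \<ge> - ((norm (gf 0))\<^sup>2 / (2 * \<mu>))"
    by (rule quad_lb[OF mu])
  ultimately show "f 0 - (norm (gf 0))\<^sup>2 / (2 * \<mu>) \<le> f v" by simp
qed

lemma norm_sq_expand:
  fixes a b :: "'a::real_inner"
  shows "(norm (a - c *\<^sub>R b))\<^sup>2 = (norm a)\<^sup>2 - 2 * c * (a \<bullet> b) + c\<^sup>2 * (norm b)\<^sup>2"
  unfolding power2_norm_eq_inner by (simp add: inner_diff_left inner_diff_right inner_commute algebra_simps power2_eq_square)

lemma inner_sq_bound:
  fixes a b :: "'a::real_inner"
  shows "\<bar>a \<bullet> b\<bar> \<le> (norm a)\<^sup>2 + (norm b)\<^sup>2"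
proof -
  have "\<bar>a \<bullet> b\<bar> \<le> norm a * norm b" by (rule Cauchy_Schwarz_ineq2)
  moreover have "0 \<le> (norm a - norm b)\<^sup>2" by simp
  hence "2 * (norm a * norm b) \<le> (norm a)\<^sup>2 + (norm b)\<^sup>2" by (simp add: power2_diff)
  moreover have "0 \<le> norm a * norm b" by simp
  ultimately show ?thesis by linarith
qed

lemma (in prob_space) int_if:
  assumes "integrable M f" "S \<in> measurable M (count_space UNIV)"
  shows "integrable M (\<lambda>\<omega>. if S \<omega> = (k::nat) then f \<omega> else (0::real))"
proof (rule Bochner_Integration.integrable_bound[OF assms(1)])
  show "(\<lambda>\<omega>. if S \<omega> = k then f \<omega> else 0) \<in> borel_measurable M"
    using assms by measurable
qed auto

theorem mainTheorem4:
  fixes M :: "'m measure" and \<Xi> :: "'c measure"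
    and N :: nat and L \<mu> G :: real and \<sigma> :: "nat \<Rightarrow> real"
    and F :: "nat \<Rightarrow> 'a::euclidean_space \<Rightarrow> real" and gradF :: "nat \<Rightarrow> 'a \<Rightarrow> 'a"
    and g :: "nat \<Rightarrow> 'a \<Rightarrow> 'c \<Rightarrow> 'a"
    and wstar :: 'a and \<eta> :: "nat \<Rightarrow> real"
    and w :: "nat \<Rightarrow> 'm \<Rightarrow> 'a" and \<xi> :: "nat \<Rightarrow> nat \<Rightarrow> 'm \<Rightarrow> 'c" and s :: "nat \<Rightarrow> 'm \<Rightarrow> nat"
    and t :: nat
  assumes P: "prob_space M"
    and N: "N \<ge> 1"
    and L: "L > 0" and mu: "\<mu> > 0"
    and grad: "\<And>k. k \<in> {1..N} \<Longrightarrow> is_gradient (F k) (gradF k)"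
    and smooth: "\<And>k. k \<in> {1..N} \<Longrightarrow> L_smooth L (F k) (gradF k)"
    and sconv: "\<And>k. k \<in> {1..N} \<Longrightarrow> strongly_convex \<mu> (F k) (gradF k)"
    and wstar: "\<And>x. (1 / real N) * (\<Sum>k=1..N. F k wstar) \<le> (1 / real N) * (\<Sum>k=1..N. F k x)"
    \<comment> \<open>stochastic gradients: measurable, unbiased, bounded variance, bounded second moment\<close>
    and g_meas: "\<And>k. k \<in> {1..N} \<Longrightarrow> (\<lambda>(x, z). g k x z) \<in> borel_measurable (borel \<Otimes>\<^sub>M \<Xi>)"
    and unbiased: "\<And>r k x. k \<in> {1..N} \<Longrightarrow>
        integrable M (\<lambda>\<omega>. g k x (\<xi> r k \<omega>)) \<and> integral\<^sup>L M (\<lambda>\<omega>. g k x (\<xi> r k \<omega>)) = gradF k x"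
    and var: "\<And>r k. k \<in> {1..N} \<Longrightarrow>
        integrable M (\<lambda>\<omega>. (norm (g k (w r \<omega>) (\<xi> r k \<omega>) - gradF k (w r \<omega>)))\<^sup>2) \<and>
        integral\<^sup>L M (\<lambda>\<omega>. (norm (g k (w r \<omega>) (\<xi> r k \<omega>) - gradF k (w r \<omega>)))\<^sup>2) \<le> (\<sigma> k)\<^sup>2"
    and second: "\<And>r k. k \<in> {1..N} \<Longrightarrow>
        integrable M (\<lambda>\<omega>. (norm (g k (w r \<omega>) (\<xi> r k \<omega>)))\<^sup>2) \<and>
        integral\<^sup>L M (\<lambda>\<omega>. (norm (g k (w r \<omega>) (\<xi> r k \<omega>)))\<^sup>2) \<le> G\<^sup>2"
    \<comment> \<open>random variables and their independence\<close>
    and w_meas: "\<And>r. w r \<in> borel_measurable M"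
    and w_sq: "\<And>r. integrable M (\<lambda>\<omega>. (norm (w r \<omega> - wstar))\<^sup>2)"
    and xi_meas: "\<And>r k. k \<in> {1..N} \<Longrightarrow> \<xi> r k \<in> measurable M \<Xi>"
    and s_meas: "\<And>r. s r \<in> measurable M (count_space UNIV)"
    and s_range: "\<And>r \<omega>. \<omega> \<in> space M \<Longrightarrow> s r \<omega> \<in> {1..N}"
    and s_unif: "\<And>r k. k \<in> {1..N} \<Longrightarrow> prob_space.prob M {\<omega> \<in> space M. s r \<omega> = k} = 1 / real N"
    and indep_xi: "\<And>r. prob_space.indep_vars M (\<lambda>_. \<Xi>) (\<xi> r) {1..N}"
    and indep_xi_s: "\<And>r. indep_rv M (PiM {1..N} (\<lambda>_. \<Xi>)) (\<lambda>\<omega>. (\<lambda>k\<in>{1..N}. \<xi> r k \<omega>))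
                                         (count_space UNIV) (s r)"
    and indep_w: "\<And>r. indep_rv M borel (w r)
                        (PiM {1..N} (\<lambda>_. \<Xi>) \<Otimes>\<^sub>M count_space UNIV) (\<lambda>\<omega>. (\<lambda>k\<in>{1..N}. \<xi> r k \<omega>, s r \<omega>))"
    \<comment> \<open>the iteration\<close>
    and iter: "\<And>r \<omega>. \<omega> \<in> space M \<Longrightarrow>
        w (Suc r) \<omega> = w r \<omega> - \<eta> r *\<^sub>R g (s r \<omega>) (w r \<omega>) (\<xi> r (s r \<omega>) \<omega>)"
    \<comment> \<open>step sizes\<close>
    and eta_pos: "\<And>r. \<eta> r > 0"
    and eta_L: "\<And>r. \<eta> r \<le> 1 / L"
    and eta_mono: "\<And>r. \<eta> (Suc r) \<le> \<eta> r"
    and eta_2: "\<And>r. \<eta> r \<le> 2 * \<eta> (Suc r)"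
  shows "(let \<Delta> = (\<lambda>r. integral\<^sup>L M (\<lambda>\<omega>. (norm (w r \<omega> - wstar))\<^sup>2));
              \<Gamma> = (1 / real N) * (\<Sum>k=1..N. F k wstar) - (1 / real N) * (\<Sum>k=1..N. (INF x. F k x));
              B = (1 / (real N)\<^sup>2) * (\<Sum>k=1..N. (\<sigma> k)\<^sup>2) + 2 * L * \<Gamma> + G\<^sup>2
          in \<Delta> (Suc t) \<le> (1 - \<mu> * \<eta> t) * \<Delta> t + (\<eta> t)\<^sup>2 * B)"
proof -
  interpret prob_space M by (rule P)
  define W where "W = w t"
  define S where "S = s t"
  define e where "e = \<eta> t"
  define Dw where "Dw = distr M borel W"
  have Wm: "W \<in> borel_measurable M" unfolding W_def by (rule w_meas)
  have Sm: "S \<in> measurable M (count_space UNIV)" unfolding S_def by (rule s_meas)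
  have Npos: "real N > 0" using N by simp
  have e_pos: "e > 0" unfolding e_def by (rule eta_pos)
  have i1: "indep_rv M borel W (\<Xi> \<Otimes>\<^sub>M count_space UNIV) (\<lambda>\<omega>. (\<xi> t k \<omega>, S \<omega>))"
    if k: "k \<in> {1..N}" for k
  proof -
    have hm: "(\<lambda>(v, j). (v k, j)) \<in> measurable (PiM {1..N} (\<lambda>_. \<Xi>) \<Otimes>\<^sub>M count_space UNIV) (\<Xi> \<Otimes>\<^sub>M count_space UNIV)"
    proof -
      note measurable_component_singleton[OF k, of "\<lambda>_. \<Xi>", measurable]
      show ?thesis by measurable
    qed
    have "indep_rv M borel (\<lambda>\<omega>. (\<lambda>x. x) (w t \<omega>)) (\<Xi> \<Otimes>\<^sub>M count_space UNIV)
        (\<lambda>\<omega>. (\<lambda>(v, j). (v k, j)) (\<lambda>k\<in>{1..N}. \<xi> t k \<omega>, s t \<omega>))"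
      by (rule indep_rv_compose[OF indep_w measurable_id hm])
    then show ?thesis using k by (simp add: W_def S_def)
  qed
  have i2: "indep_rv M \<Xi> (\<xi> t k) (count_space UNIV) S" if k: "k \<in> {1..N}" for k
  proof -
    have hm: "(\<lambda>v. v k) \<in> measurable (PiM {1..N} (\<lambda>_. \<Xi>)) \<Xi>"
      by (rule measurable_component_singleton[OF k])
    have "indep_rv M \<Xi> (\<lambda>\<omega>. (\<lambda>v. v k) (\<lambda>k\<in>{1..N}. \<xi> t k \<omega>)) (count_space UNIV) (\<lambda>\<omega>. (\<lambda>x. x) (s t \<omega>))"
      by (rule indep_rv_compose[OF indep_xi_s hm measurable_id])
    then show ?thesis using k by (simp add: S_def)
  qed
  define C where "C k \<omega> = (W \<omega> - wstar) \<bullet> g k (W \<omega>) (\<xi> t k \<omega>)" for k \<omega>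
  define Y where "Y k \<omega> = (norm (g k (W \<omega>) (\<xi> t k \<omega>)))\<^sup>2" for k \<omega>
  define D where "D \<omega> = (norm (W \<omega> - wstar))\<^sup>2" for \<omega>
  have intD: "integrable M D" unfolding D_def W_def by (rule w_sq)
  have intY: "integrable M (Y k)" and EY: "integral\<^sup>L M (Y k) \<le> G\<^sup>2" if k: "k \<in> {1..N}" for k
    using second[OF k, of t] unfolding Y_def W_def by auto
  have gkm: "(\<lambda>(x, z). g k x z) \<in> borel_measurable (borel \<Otimes>\<^sub>M \<Xi>)" if k: "k \<in> {1..N}" for k
    by (rule g_meas[OF k])
  have hCm: "(\<lambda>(x, z). (x - wstar) \<bullet> g k x z) \<in> borel_measurable (borel \<Otimes>\<^sub>M \<Xi>)" if k: "k \<in> {1..N}" for k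
  proof -
    note gkm[OF k, measurable]
    show ?thesis by measurable
  qed
  have hYm: "(\<lambda>(x, z). (norm (g k x z))\<^sup>2) \<in> borel_measurable (borel \<Otimes>\<^sub>M \<Xi>)" if k: "k \<in> {1..N}" for k
  proof -
    note gkm[OF k, measurable]
    show ?thesis by measurable
  qed
  have intC: "integrable M (C k)" if k: "k \<in> {1..N}" for k
  proof (rule Bochner_Integration.integrable_bound[OF Bochner_Integration.integrable_add[OF intD intY[OF k]]])
    have "(\<lambda>\<omega>. (W \<omega>, \<xi> t k \<omega>)) \<in> measurable M (borel \<Otimes>\<^sub>M \<Xi>)"
      using Wm xi_meas[OF k] by measurable
    from measurable_compose[OF this hCm[OF k]]
    show "C k \<in> borel_measurable M" unfolding C_def by simp
    show "AE x in M. norm (C k x) \<le> norm (D x + Y k x)"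
      unfolding C_def D_def Y_def using inner_sq_bound by (auto intro!: AE_I2)
  qed
  have pw: "(norm (w (Suc t) \<omega> - wstar))\<^sup>2 = D \<omega> - 2 * e * (\<Sum>k=1..N. (if S \<omega> = k then C k \<omega> else 0))
              + e\<^sup>2 * (\<Sum>k=1..N. (if S \<omega> = k then Y k \<omega> else 0))" if \<omega>: "\<omega> \<in> space M" for \<omega>
  proof -
    have Sr: "S \<omega> \<in> {1..N}" using s_range[OF \<omega>] unfolding S_def .
    have eq: "w (Suc t) \<omega> - wstar = (W \<omega> - wstar) - e *\<^sub>R g (S \<omega>) (W \<omega>) (\<xi> t (S \<omega>) \<omega>)"
      using iter[OF \<omega>, of t] unfolding W_def S_def e_def by simp
    show ?thesis
      unfolding eq norm_sq_expand using Sr by (simp add: C_def Y_def D_def sum.delta')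
  qed
  have selC: "(\<integral>\<omega>. (if S \<omega> = k then C k \<omega> else 0) \<partial>M) = 1 / real N * integral\<^sup>L M (C k)"
    if k: "k \<in> {1..N}" for k
    using key_K1[OF i1[OF k] i2[OF k] hCm[OF k], of k] intC[OF k] s_unif[OF k, of t]
    unfolding C_def S_def by simp
  have selY: "(\<integral>\<omega>. (if S \<omega> = k then Y k \<omega> else 0) \<partial>M) = 1 / real N * integral\<^sup>L M (Y k)"
    if k: "k \<in> {1..N}" for k
    using key_K1[OF i1[OF k] i2[OF k] hYm[OF k], of k] intY[OF k] s_unif[OF k, of t]
    unfolding Y_def S_def by simp
  define \<phi> where "\<phi> k x = (x - wstar) \<bullet> gradF k x" for k x
  have EC: "integral\<^sup>L M (C k) = integral\<^sup>L Dw (\<phi> k)" and intphi: "integrable Dw (\<phi> k)"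
    if k: "k \<in> {1..N}" for k
  proof -
    have qm: "(\<lambda>(x, z, j). (x - wstar) \<bullet> g k x z) \<in> borel_measurable (borel \<Otimes>\<^sub>M (\<Xi> \<Otimes>\<^sub>M count_space UNIV))"
    proof -
      note hCm[OF k, measurable]
      show ?thesis by measurable
    qed
    note G = fubini_G[OF i1[OF k] qm, simplified]
    have inn: "(\<integral>\<omega>. (x - wstar) \<bullet> g k x (\<xi> t k \<omega>) \<partial>M) = \<phi> k x" for x
      using unbiased[OF k, where r=t and x=x] unfolding \<phi>_def by simp
    show "integral\<^sup>L M (C k) = integral\<^sup>L Dw (\<phi> k)"
      using G(1) intC[OF k] unfolding C_def Dw_def inn by simp
    show "integrable Dw (\<phi> k)"
      using G(3) intC[OF k] unfolding C_def Dw_def inn by simp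
  qed
  have intDw: "integrable Dw (\<lambda>x. (norm (x - wstar))\<^sup>2)"
    unfolding Dw_def using intD Wm unfolding D_def by (subst integrable_distr_eq) auto
  have EDw: "integral\<^sup>L Dw (\<lambda>x. (norm (x - wstar))\<^sup>2) = integral\<^sup>L M D"
    unfolding Dw_def D_def using Wm by (subst integral_distr) auto
  have phi_lb: "(\<Sum>k=1..N. \<phi> k x) \<ge> real N * (\<mu> / 2 * (norm (x - wstar))\<^sup>2)" for x
  proof -
    have "\<phi> k x \<ge> F k x - F k wstar + \<mu> / 2 * (norm (x - wstar))\<^sup>2" if k: "k \<in> {1..N}" for k
    proof -
      have "F k wstar \<ge> F k x + (wstar - x) \<bullet> gradF k x + \<mu> / 2 * (norm (wstar - x))\<^sup>2"
        using sconv[OF k] unfolding strongly_convex_def by blast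
      moreover have "(wstar - x) \<bullet> gradF k x = - \<phi> k x" unfolding \<phi>_def
        by (simp add: inner_diff_left)
      moreover have "norm (wstar - x) = norm (x - wstar)" by (rule norm_minus_commute)
      ultimately show ?thesis by simp
    qed
    then have "(\<Sum>k=1..N. \<phi> k x) \<ge> (\<Sum>k=1..N. F k x - F k wstar + \<mu> / 2 * (norm (x - wstar))\<^sup>2)"
      by (rule sum_mono)
    moreover have "(\<Sum>k=1..N. F k x - F k wstar + \<mu> / 2 * (norm (x - wstar))\<^sup>2)
        = (\<Sum>k=1..N. F k x) - (\<Sum>k=1..N. F k wstar) + real N * (\<mu> / 2 * (norm (x - wstar))\<^sup>2)"
      by (simp add: sum.distrib sum_subtractf)
    moreover have "(\<Sum>k=1..N. F k wstar) \<le> (\<Sum>k=1..N. F k x)"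
      using wstar[of x] Npos by (simp add: divide_le_cancel mult_le_cancel_left_pos)
    ultimately show ?thesis by linarith
  qed
  define A where "A = (\<Sum>k=1..N. (\<integral>\<omega>. (if S \<omega> = k then C k \<omega> else 0) \<partial>M))"
  define Bs where "Bs = (\<Sum>k=1..N. (\<integral>\<omega>. (if S \<omega> = k then Y k \<omega> else 0) \<partial>M))"
  have Bs_le: "Bs \<le> G\<^sup>2"
  proof -
    have "Bs = (\<Sum>k=1..N. 1 / real N * integral\<^sup>L M (Y k))" unfolding Bs_def
      by (rule sum.cong) (auto simp: selY)
    also have "\<dots> \<le> (\<Sum>k=1..N. 1 / real N * G\<^sup>2)"
      by (rule sum_mono) (use EY Npos in \<open>auto intro: divide_right_mono\<close>)
    also have "\<dots> = G\<^sup>2" using Npos by simp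
    finally show ?thesis .
  qed
  have A_ge: "A \<ge> \<mu> / 2 * integral\<^sup>L M D"
  proof -
    have "A = (\<Sum>k=1..N. 1 / real N * integral\<^sup>L Dw (\<phi> k))" unfolding A_def
      by (rule sum.cong) (auto simp: selC EC)
    also have "\<dots> = 1 / real N * integral\<^sup>L Dw (\<lambda>x. \<Sum>k=1..N. \<phi> k x)"
      using intphi by (simp add: integral_sum sum_divide_distrib)
    also have "\<dots> \<ge> 1 / real N * integral\<^sup>L Dw (\<lambda>x. real N * (\<mu> / 2 * (norm (x - wstar))\<^sup>2))"
    proof -
      have "integral\<^sup>L Dw (\<lambda>x. real N * (\<mu> / 2 * (norm (x - wstar))\<^sup>2)) \<le> integral\<^sup>L Dw (\<lambda>x. \<Sum>k=1..N. \<phi> k x)"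
        by (rule integral_mono) (use intphi intDw phi_lb in auto)
      then show ?thesis using Npos by (simp add: field_simps)
    qed
    also have "1 / real N * integral\<^sup>L Dw (\<lambda>x. real N * (\<mu> / 2 * (norm (x - wstar))\<^sup>2)) = \<mu> / 2 * integral\<^sup>L M D"
      using Npos EDw by simp
    finally show ?thesis .
  qed
  have tC: "integrable M (\<lambda>\<omega>. if S \<omega> = k then C k \<omega> else 0)" if k: "k \<in> {1..N}" for k
    by (rule int_if[OF intC[OF k] Sm])
  have tY: "integrable M (\<lambda>\<omega>. if S \<omega> = k then Y k \<omega> else 0)" if k: "k \<in> {1..N}" for k
    by (rule int_if[OF intY[OF k] Sm])
  have intsC: "integrable M (\<lambda>\<omega>. \<Sum>k=1..N. (if S \<omega> = k then C k \<omega> else 0))"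
    by (intro Bochner_Integration.integrable_sum tC)
  have intsY: "integrable M (\<lambda>\<omega>. \<Sum>k=1..N. (if S \<omega> = k then Y k \<omega> else 0))"
    by (intro Bochner_Integration.integrable_sum tY)
  have "integral\<^sup>L M (\<lambda>\<omega>. (norm (w (Suc t) \<omega> - wstar))\<^sup>2)
      = integral\<^sup>L M (\<lambda>\<omega>. D \<omega> - 2 * e * (\<Sum>k=1..N. (if S \<omega> = k then C k \<omega> else 0))
              + e\<^sup>2 * (\<Sum>k=1..N. (if S \<omega> = k then Y k \<omega> else 0)))"
    by (rule Bochner_Integration.integral_cong) (auto simp: pw)
  also have "\<dots> = integral\<^sup>L M D - 2 * e * integral\<^sup>L M (\<lambda>\<omega>. \<Sum>k=1..N. (if S \<omega> = k then C k \<omega> else 0))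
       + e\<^sup>2 * integral\<^sup>L M (\<lambda>\<omega>. \<Sum>k=1..N. (if S \<omega> = k then Y k \<omega> else 0))"
    using intD intsC intsY by simp
  also have "\<dots> = integral\<^sup>L M D - 2 * e * A + e\<^sup>2 * Bs"
  proof -
    have sC: "integral\<^sup>L M (\<lambda>\<omega>. \<Sum>k=1..N. (if S \<omega> = k then C k \<omega> else 0)) = A"
      unfolding A_def by (rule Bochner_Integration.integral_sum) (rule tC)
    have sY: "integral\<^sup>L M (\<lambda>\<omega>. \<Sum>k=1..N. (if S \<omega> = k then Y k \<omega> else 0)) = Bs"
      unfolding Bs_def by (rule Bochner_Integration.integral_sum) (rule tY)
    show ?thesis by (simp only: sC sY)
  qed
  finally have Dnext: "integral\<^sup>L M (\<lambda>\<omega>. (norm (w (Suc t) \<omega> - wstar))\<^sup>2) = integral\<^sup>L M D - 2 * e * A + e\<^sup>2 * Bs" .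
  \<comment> \<open>B is at least G^2\<close>
  have Gam: "(1 / real N) * (\<Sum>k=1..N. F k wstar) - (1 / real N) * (\<Sum>k=1..N. (INF x. F k x)) \<ge> 0"
  proof -
    have "(\<Sum>k=1..N. (INF x. F k x)) \<le> (\<Sum>k=1..N. F k wstar)"
      by (rule sum_mono) (auto intro!: cINF_lower sc_bdd[OF sconv mu])
    then show ?thesis using Npos by (simp add: divide_le_cancel mult_le_cancel_left_pos)
  qed
  have sig: "(1 / (real N)\<^sup>2) * (\<Sum>k=1..N. (\<sigma> k)\<^sup>2) \<ge> 0" by (simp add: sum_nonneg)
  have "integral\<^sup>L M D - 2 * e * A \<le> (1 - \<mu> * e) * integral\<^sup>L M D"
  proof -
    have "2 * e * A \<ge> 2 * e * (\<mu> / 2 * integral\<^sup>L M D)"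
      using A_ge e_pos by (intro mult_left_mono) auto
    then show ?thesis by (simp add: algebra_simps)
  qed
  moreover have "e\<^sup>2 * Bs \<le> e\<^sup>2 * ((1 / (real N)\<^sup>2) * (\<Sum>k=1..N. (\<sigma> k)\<^sup>2)
      + 2 * L * ((1 / real N) * (\<Sum>k=1..N. F k wstar) - (1 / real N) * (\<Sum>k=1..N. (INF x. F k x))) + G\<^sup>2)"
  proof (rule mult_left_mono)
    have "0 \<le> 2 * L * ((1 / real N) * (\<Sum>k=1..N. F k wstar) - (1 / real N) * (\<Sum>k=1..N. (INF x. F k x)))"
      using Gam L by (intro mult_nonneg_nonneg) auto
    then show "Bs \<le> (1 / (real N)\<^sup>2) * (\<Sum>k=1..N. (\<sigma> k)\<^sup>2)
      + 2 * L * ((1 / real N) * (\<Sum>k=1..N. F k wstar) - (1 / real N) * (\<Sum>k=1..N. (INF x. F k x))) + G\<^sup>2"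
      using Bs_le sig by linarith
  qed simp
  ultimately show ?thesis
    unfolding Let_def using Dnext unfolding D_def W_def e_def by linarith
qed

end
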